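(* Let $m,k$ be positive integers with $m>k+2$, and let $\pi$ be a permutation of $\mathbb{F}_{2^m}$ satisfying Property (P) (defined in the context). For each $z\in\mathbb{F}_{2^k}$ define $f^{(z)}:\mathbb{F}_{2^m}\times\mathbb{F}_{2^m}\to\mathbb{F}_2$ by \[ f^{(z)}(x_1,x_2)=\begin{cases}{\rm Tr}_1^m\bigl(x_1\,\pi(x_2)\bigr), & \text{if } {\rm Tr}_1^k(z)=0,\\ {\rm Tr}_1^m\bigl(x_2\,\pi(x_1)\bigr), & \text{if } {\rm Tr}_1^k(z)=1.\end{cases} \] Then the function $f:\mathbb{F}_{2^m}\times\mathbb{F}_{2^m}\times\mathbb{F}_{2^k}\times\mathbb{F}_{2^k}\to\mathbb{F}_2$, $f(x_1,x_2,y,z)=f^{(z)}(x_1,x_2)+{\rm Tr}_1^k(yz)$, is a GMM function that does not belong to the class $MM^{\#}$.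
   Context: ${\rm Tr}_a^b$ denotes the trace map from $\mathbb{F}_{2^b}$ to $\mathbb{F}_{2^a}$. Property (P) of a permutation $\pi$ of $\mathbb{F}_{2^m}$: for all $(a_1,a_2),(b_1,b_2)\in\mathbb{F}_{2^m}\times\mathbb{F}_{2^m}$, the two identities $\pi(x)+\pi(x+a_2)+\pi(x+b_2)+\pi(x+a_2+b_2)=0$ and ${\rm Tr}_1^m\bigl(a_1\pi(x+a_2)+b_1\pi(x+b_2)+(a_1+b_1)\pi(x+a_2+b_2)\bigr)=0$ hold for all $x\in\mathbb{F}_{2^m}$ if and only if one of the following holds: $(a_1,a_2)=(0,0)$, $(b_1,b_2)=(0,0)$, $(a_1,a_2)=(b_1,b_2)$, or $a_2=b_2=0$. A Boolean function $g$ on an $n$-dimensional $\mathbb{F}_2$-space $V$ is bent if $|\sum_{x\in V}(-1)^{g(x)+\langle b,x\rangle}|=2^{n/2}$ for all $b\in V$ (for a nondegenerate inner product). A GMM (generalized Maiorana–McFarland) function is a function of the form $f(x,y,z)=f^{(z)}(x)+{\rm Tr}_1^k(yz)$ on $W\times\mathbb{F}_{2^k}\times\mathbb{F}_{2^k}$ where every $f^{(z)}$ is bent on $W$. Two Boolean functions $f,g$ on $V$ are EA-equivalent if $g(x)=f(L(x)+a)+\langle c,x\rangle+b$ with $L$ a linear permutation of $V$, $a,c\in V$, $b\in\mathbb{F}_2$. The Maiorana–McFarland class $MM$ on $\mathbb{F}_{2^N}\times\mathbb{F}_{2^N}$ consists of functions ${\rm Tr}_1^N(x\pi'(y))+g(y)$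 with $\pi'$ a permutation of $\mathbb{F}_{2^N}$ and $g$ arbitrary; $MM^{\#}$ denotes the set of all Boolean functions on a $2N$-dimensional $\mathbb{F}_2$-space that are EA-equivalent (after an $\mathbb{F}_2$-linear identification of the space with $\mathbb{F}_{2^N}\times\mathbb{F}_{2^N}$) to a function of $MM$. *)

theory Defs
  imports Complex_Main "HOL-Library.Product_Plus" "HOL-Library.Cardinality"
begin

definition tr :: "nat \<Rightarrow> 'a::field \<Rightarrow> 'a" where
  "tr n x = (\<Sum>i<n. x ^ (2 ^ i))"

text \<open>The trace viewed as a Boolean value (element of F_2 = bool, True = 1).\<close>
definition trb :: "nat \<Rightarrow> 'a::field \<Rightarrow> bool" where
  "trb n x \<longleftrightarrow> tr n x = 1"

text \<open>F_2-linear functionals on an elementary abelian 2-group (addition in F_2 is xor).\<close>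
definition lin_functional :: "('v::ab_group_add \<Rightarrow> bool) \<Rightarrow> bool" where
  "lin_functional l \<longleftrightarrow> (\<forall>x y. l (x + y) = (l x \<noteq> l y))"

definition lin_map :: "('v::ab_group_add \<Rightarrow> 'w::ab_group_add) \<Rightarrow> bool" where
  "lin_map L \<longleftrightarrow> (\<forall>x y. L (x + y) = L x + L y)"

text \<open>The linear functionals x \<mapsto> <b,x> for a nondegenerate inner
  product are exactly all linear functionals.\<close>
definition bent :: "('v::{ab_group_add,finite} \<Rightarrow> bool) \<Rightarrow> bool" where
  "bent g \<longleftrightarrow> (\<forall>l. lin_functional l \<longrightarrow>
      \<bar>\<Sum>x\<in>UNIV. (-1::real) ^ (if g x \<noteq> l x then 1 else 0)\<bar> = sqrt (real (card (UNIV :: 'v set))))"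

definition is_GMM :: "nat \<Rightarrow> (('w::{ab_group_add,finite}) \<times> ('b::field) \<times> 'b \<Rightarrow> bool) \<Rightarrow> bool" where
  "is_GMM k f \<longleftrightarrow> (\<exists>fz :: 'b \<Rightarrow> 'w \<Rightarrow> bool. (\<forall>z. bent (fz z)) \<and>
      (\<forall>w y z. f (w, y, z) = (fz z w \<noteq> trb k (y * z))))"

definition EA_equiv :: "('v::ab_group_add \<Rightarrow> bool) \<Rightarrow> ('v \<Rightarrow> bool) \<Rightarrow> bool" where
  "EA_equiv f g \<longleftrightarrow> (\<exists>L a l b. lin_map L \<and> bij L \<and> lin_functional l \<and>
      (\<forall>x. g x = ((f (L x + a) \<noteq> l x) \<noteq> b)))"

definition MM :: "nat \<Rightarrow> ('c::field \<times> 'c \<Rightarrow> bool) \<Rightarrow> bool" where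
  "MM N h \<longleftrightarrow> (\<exists>\<pi>' g. bij \<pi>' \<and> (\<forall>x y. h (x, y) = (trb N (x * \<pi>' y) \<noteq> g y)))"

text \<open>MM^#: EA-equivalent, after an F_2-linear identification of V with F_{2^N} \<times> F_{2^N}
  (the field F_{2^N} being represented by the type 'c), to a function of MM.\<close>
definition MM_sharp :: "'c::field itself \<Rightarrow> nat \<Rightarrow> ('v::ab_group_add \<Rightarrow> bool) \<Rightarrow> bool" where
  "MM_sharp _ N f \<longleftrightarrow> (\<exists>(\<phi> :: 'v \<Rightarrow> 'c \<times> 'c) h. lin_map \<phi> \<and> bij \<phi> \<and> MM N h \<and>
      EA_equiv (h \<circ> \<phi>) f)"

definition property_P :: "nat \<Rightarrow> ('a::field \<Rightarrow> 'a) \<Rightarrow> bool" where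
  "property_P m \<pi> \<longleftrightarrow> (\<forall>a1 a2 b1 b2.
     (\<forall>x. \<pi> x + \<pi> (x + a2) + \<pi> (x + b2) + \<pi> (x + a2 + b2) = 0 \<and>
          tr m (a1 * \<pi> (x + a2) + b1 * \<pi> (x + b2) + (a1 + b1) * \<pi> (x + a2 + b2)) = 0)
     \<longleftrightarrow> ((a1, a2) = (0, 0) \<or> (b1, b2) = (0, 0) \<or> (a1, a2) = (b1, b2) \<or> (a2 = 0 \<and> b2 = 0)))"

end

theory Submission
  imports Defs "HOL-Computational_Algebra.Polynomial"
begin

lemma ff_fermat:
  fixes x :: "'a::{field,finite}"
  assumes "x \<noteq> 0"
  shows "x ^ (CARD('a) - 1) = 1"
proof -
  let ?S = "UNIV - {0::'a}"
  have cS: "card ?S = CARD('a) - 1" by (simp add: card_Diff_singleton)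
  have inj: "inj_on (\<lambda>y. x * y) ?S" using assms by (auto simp: inj_on_def)
  have img: "(\<lambda>y. x * y) ` ?S = ?S"
  proof
    show "(\<lambda>y. x * y) ` ?S \<subseteq> ?S" using assms by auto
    show "?S \<subseteq> (\<lambda>y. x * y) ` ?S"
    proof
      fix z assume "z \<in> ?S"
      then have "z = x * (z / x)" "z / x \<in> ?S" using assms by auto
      then show "z \<in> (\<lambda>y. x * y) ` ?S" by blast
    qed
  qed
  have "prod (\<lambda>y. y) ?S = prod (\<lambda>y. y) ((\<lambda>y. x * y) ` ?S)" using img by simp
  also have "\<dots> = prod (\<lambda>y. x * y) ?S" using prod.reindex[OF inj] by simp
  also have "\<dots> = x ^ card ?S * prod (\<lambda>y. y) ?S" by (simp add: prod.distrib)
  finally have "prod (\<lambda>y. y) ?S = x ^ card ?S * prod (\<lambda>y. y) ?S" .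
  moreover have "prod (\<lambda>y. y) ?S \<noteq> 0" by simp
  ultimately have "x ^ card ?S = 1" by simp
  then show ?thesis using cS by simp
qed

lemma ff_char2:
  assumes "CARD('a::{field,finite}) = 2 ^ n" "n > 0"
  shows "(1::'a) + 1 = 0"
proof -
  have "odd (CARD('a) - 1)" using assms by simp
  then have "(-1::'a) ^ (CARD('a) - 1) = -1" by simp
  moreover have "(-1::'a) ^ (CARD('a) - 1) = 1" by (rule ff_fermat) simp
  ultimately have "(-1::'a) = 1" by simp
  then show ?thesis by (metis add.right_inverse)
qed

lemma ff_add_self:
  assumes "CARD('a::{field,finite}) = 2 ^ n" "n > 0"
  shows "(x::'a) + x = 0"
proof -
  have "x + x = x * (1 + 1)" by (simp add: algebra_simps)
  then show ?thesis using ff_char2[OF assms] by simp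
qed

lemma ff_frob_id:
  assumes "CARD('a::{field,finite}) = 2 ^ n"
  shows "(x::'a) ^ (2 ^ n) = x"
proof (cases "x = 0")
  case True then show ?thesis by simp
next
  case False
  have "CARD('a) > 0" by simp
  then have e: "2 ^ n = Suc (CARD('a) - 1)" using assms by simp
  have "x ^ (2 ^ n) = x ^ Suc (CARD('a) - 1)" by (simp only: e)
  then have "x ^ (2 ^ n) = x * x ^ (CARD('a) - 1)" by (simp only: power_Suc)
  then show ?thesis using ff_fermat[OF False] by simp
qed

lemma ff_sq_add:
  assumes "CARD('a::{field,finite}) = 2 ^ n" "n > 0"
  shows "((x::'a) + y) ^ 2 = x ^ 2 + y ^ 2"
proof -
  have "(x + y) ^ 2 = x ^ 2 + y ^ 2 + (x * y + x * y)" by (simp add: power2_eq_square algebra_simps)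
  then show ?thesis using ff_add_self[OF assms] by simp
qed

lemma ff_pow2_add:
  assumes "CARD('a::{field,finite}) = 2 ^ n" "n > 0"
  shows "((x::'a) + y) ^ (2 ^ i) = x ^ (2 ^ i) + y ^ (2 ^ i)"
proof (induction i)
  case 0 then show ?case by simp
next
  case (Suc i)
  have "(x + y) ^ (2 ^ Suc i) = ((x + y) ^ (2 ^ i)) ^ 2" by (simp add: power_mult[symmetric] mult.commute)
  also have "\<dots> = (x ^ (2 ^ i) + y ^ (2 ^ i)) ^ 2" using Suc by simp
  also have "\<dots> = (x ^ (2 ^ i)) ^ 2 + (y ^ (2 ^ i)) ^ 2" by (rule ff_sq_add[OF assms])
  also have "\<dots> = x ^ (2 ^ Suc i) + y ^ (2 ^ Suc i)" by (simp add: power_mult[symmetric] mult.commute)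
  finally show ?case .
qed

lemma tr_add:
  assumes "CARD('a::{field,finite}) = 2 ^ n" "n > 0"
  shows "tr n ((x::'a) + y) = tr n x + tr n y"
  unfolding tr_def by (simp add: ff_pow2_add[OF assms] sum.distrib)

lemma tr_sq:
  assumes "CARD('a::{field,finite}) = 2 ^ n" "n > 0"
  shows "(tr n (x::'a)) ^ 2 = tr n x"
proof -
  have sq: "(\<Sum>i<N. (x::'a) ^ (2 ^ i)) ^ 2 = (\<Sum>i<N. x ^ (2 ^ Suc i))" for N
  proof (induction N)
    case 0 then show ?case by simp
  next
    case (Suc N)
    have "(\<Sum>i<Suc N. x ^ (2 ^ i)) ^ 2 = ((\<Sum>i<N. x ^ (2 ^ i)) + x ^ (2 ^ N)) ^ 2" by simp
    also have "\<dots> = (\<Sum>i<N. x ^ (2 ^ i)) ^ 2 + (x ^ (2 ^ N)) ^ 2" by (rule ff_sq_add[OF assms])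
    also have "\<dots> = (\<Sum>i<Suc N. x ^ (2 ^ Suc i))" using Suc by (simp add: power_mult[symmetric] mult.commute)
    finally show ?case .
  qed
  have A: "(\<Sum>i<Suc n. x ^ (2 ^ i)) = x + (\<Sum>i<n. x ^ (2 ^ Suc i))"
    by (subst sum.lessThan_Suc_shift) simp
  have B: "(\<Sum>i<Suc n. x ^ (2 ^ i)) = (\<Sum>i<n. x ^ (2 ^ i)) + x"
    using ff_frob_id[OF assms(1), of x] by simp
  have "(\<Sum>i<n. x ^ (2 ^ Suc i)) = (\<Sum>i<n. x ^ (2 ^ i))" using A B by (simp add: add.commute)
  then show ?thesis unfolding tr_def using sq by simp
qed

lemma tr_01:
  assumes "CARD('a::{field,finite}) = 2 ^ n" "n > 0"
  shows "tr n (x::'a) = 0 \<or> tr n x = 1"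
proof -
  have "tr n x * (tr n x - 1) = 0" using tr_sq[OF assms, of x] by (simp add: power2_eq_square algebra_simps)
  then show ?thesis by simp
qed

lemma tr_nonzero:
  assumes "CARD('a::{field,finite}) = 2 ^ n" "n > 0"
  shows "\<exists>x::'a. tr n x \<noteq> 0"
proof (rule ccontr)
  assume "\<not> ?thesis"
  then have all0: "\<forall>x::'a. tr n x = 0" by simp
  define p :: "'a poly" where "p = (\<Sum>i<n. monom 1 (2 ^ i))"
  have ev: "poly p x = tr n x" for x unfolding p_def tr_def by (simp add: poly_sum poly_monom)
  have c: "coeff p j = (\<Sum>i<n. if 2 ^ i = j then 1 else 0)" for j
    unfolding p_def by (simp add: coeff_sum)
  have "coeff p 1 = 1"
  proof -
    have "(\<Sum>i<n. if 2 ^ i = (1::nat) then (1::'a) else 0) = (\<Sum>i<n. if i = 0 then 1 else 0)"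
      by (intro sum.cong) auto
    also have "\<dots> = 1" using assms(2) by simp
    finally have "(\<Sum>i<n. if 2 ^ i = (1::nat) then (1::'a) else 0) = 1" .
    then show ?thesis using c by simp
  qed
  then have pnz: "p \<noteq> 0" by auto
  have "degree p \<le> 2 ^ (n - 1)"
  proof (rule degree_le)
    show "\<forall>j>2 ^ (n - 1). coeff p j = 0"
    proof (intro allI impI)
      fix j :: nat assume j: "j > 2 ^ (n - 1)"
      have "2 ^ i \<noteq> j" if "i < n" for i
      proof -
        have "(2::nat) ^ i \<le> 2 ^ (n - 1)" using that by (intro power_increasing) auto
        then show ?thesis using j by linarith
      qed
      then show "coeff p j = 0" using c by simp
    qed
  qed
  moreover have "card {x. poly p x = 0} \<le> degree p" by (rule card_poly_roots_bound[OF pnz])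
  moreover have "{x. poly p x = 0} = (UNIV :: 'a set)" using all0 ev by auto
  moreover have "(2::nat) ^ (n - 1) < 2 ^ n" using assms(2) by simp
  ultimately show False using assms(1) by (metis le_trans not_le)
qed

lemma trb_add:
  assumes "CARD('a::{field,finite}) = 2 ^ n" "n > 0"
  shows "trb n ((x::'a) + y) = (trb n x \<noteq> trb n y)"
proof -
  have "(1::'a) \<noteq> 0" by simp
  then show ?thesis
    unfolding trb_def tr_add[OF assms]
    using tr_01[OF assms, of x] tr_01[OF assms, of y] ff_char2[OF assms] by auto
qed

lemma trb_zero: "trb n (0::'a::field) = False"
  unfolding trb_def tr_def by (simp add: power_0_left)

lemma trb_exists:
  assumes "CARD('a::{field,finite}) = 2 ^ n" "n > 0"
  shows "\<exists>x::'a. trb n x"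
  using tr_nonzero[OF assms] tr_01[OF assms] unfolding trb_def by blast

lemma trb_nondeg:
  assumes "CARD('a::{field,finite}) = 2 ^ n" "n > 0" and "(c::'a) \<noteq> 0"
  shows "\<exists>x. trb n (x * c)"
proof -
  obtain w :: 'a where "trb n w" using trb_exists[OF assms(1,2)] by blast
  then have "trb n ((w / c) * c)" using assms(3) by simp
  then show ?thesis by blast
qed


definition sb :: "bool \<Rightarrow> real" where "sb b = (if b then -1 else 1)"

lemma sb_xor: "sb (a \<noteq> b) = sb a * sb b" unfolding sb_def by auto

lemma sum_shift:
  fixes g :: "'v::{ab_group_add,finite} \<Rightarrow> real"
  shows "(\<Sum>x\<in>UNIV. g (x + y)) = (\<Sum>x\<in>UNIV. g x)"
  by (rule sum.reindex_bij_witness[of _ "\<lambda>x. x - y" "\<lambda>x. x + y"]) auto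

lemma char_sum:
  fixes \<chi> :: "'v::{ab_group_add,finite} \<Rightarrow> bool"
  assumes "\<And>x y. \<chi> (x + y) = (\<chi> x \<noteq> \<chi> y)"
  shows "(\<Sum>x\<in>UNIV. sb (\<chi> x)) = (if \<forall>x. \<not> \<chi> x then real CARD('v) else 0)"
proof (cases "\<forall>x. \<not> \<chi> x")
  case True then show ?thesis by (simp add: sb_def)
next
  case False
  then obtain y where y: "\<chi> y" by blast
  have "(\<Sum>x\<in>UNIV. sb (\<chi> x)) = (\<Sum>x\<in>UNIV. sb (\<chi> (x + y)))" by (rule sum_shift[symmetric])
  also have "\<dots> = (\<Sum>x\<in>UNIV. - sb (\<chi> x))" using y by (intro sum.cong) (auto simp: assms sb_def)
  also have "\<dots> = - (\<Sum>x\<in>UNIV. sb (\<chi> x))" by (simp add: sum_negf)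
  finally show ?thesis using False by simp
qed

lemma lin_functional_zero: "lin_functional l \<Longrightarrow> l 0 = False"
  unfolding lin_functional_def by (metis add.right_neutral)

lemma unique_trace_rep:
  assumes "CARD('a::{field,finite}) = 2 ^ n" "n > 0"
    and l: "lin_functional (l1 :: 'a \<Rightarrow> bool)"
  shows "card {c::'a. \<forall>x. trb n (x * c) = l1 x} = 1"
proof -
  define T where "T c \<longleftrightarrow> (\<forall>x. trb n (x * c) = l1 x)" for c :: 'a
  let ?N = "real CARD('a)"
  have ch1: "(\<Sum>x\<in>UNIV. sb (trb n (x * c) \<noteq> l1 x)) = (if T c then ?N else 0)" for c
  proof -
    have "(\<Sum>x\<in>UNIV. sb (trb n (x * c) \<noteq> l1 x)) =
        (if \<forall>x. \<not> (trb n (x * c) \<noteq> l1 x) then ?N else 0)"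
      by (rule char_sum) (use l in \<open>auto simp: lin_functional_def trb_add[OF assms(1,2)] distrib_right\<close>)
    then show ?thesis unfolding T_def by simp
  qed
  have ch2: "(\<Sum>c\<in>UNIV. sb (trb n (x * c))) = (if x = 0 then ?N else 0)" for x :: 'a
  proof -
    have "(\<Sum>c\<in>UNIV. sb (trb n (x * c))) = (if \<forall>c. \<not> trb n (x * c) then ?N else 0)"
      by (rule char_sum) (auto simp: trb_add[OF assms(1,2)] distrib_left)
    moreover have "(\<forall>c. \<not> trb n (x * c)) \<longleftrightarrow> x = 0"
      using trb_nondeg[OF assms(1,2), of x] by (auto simp: trb_zero mult.commute)
    ultimately show ?thesis by simp
  qed
  have "(\<Sum>c\<in>UNIV. \<Sum>x\<in>UNIV. sb (trb n (x * c) \<noteq> l1 x)) =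
        (\<Sum>x\<in>UNIV. \<Sum>c\<in>UNIV. sb (l1 x) * sb (trb n (x * c)))"
    by (subst sum.swap) (intro sum.cong refl, auto simp: sb_def)
  also have "\<dots> = (\<Sum>x\<in>UNIV. sb (l1 x) * (if x = 0 then ?N else 0))"
    by (intro sum.cong refl) (simp only: sum_distrib_left[symmetric] ch2)
  also have "\<dots> = (\<Sum>x\<in>UNIV. if x = (0::'a) then ?N else 0)"
    by (rule sum.cong[OF refl]) (auto simp: sb_def lin_functional_zero[OF l])
  also have "\<dots> = ?N" by simp
  finally have "(\<Sum>c\<in>UNIV. (if T c then ?N else 0)) = ?N" using ch1 by simp
  then have "?N * real (card {c. T c}) = ?N"
    by (simp add: sum.If_cases)
  then have "card {c. T c} = 1" by simp
  then show ?thesis unfolding T_def .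
qed

lemma bent_F0:
  assumes "CARD('a::{field,finite}) = 2 ^ n" "n > 0" and "bij (\<pi> :: 'a \<Rightarrow> 'a)"
  shows "bent (\<lambda>(x1::'a, x2::'a). trb n (x1 * \<pi> x2))"
  unfolding bent_def
proof (intro allI impI)
  fix l :: "'a \<times> 'a \<Rightarrow> bool" assume l: "lin_functional l"
  define l1 where "l1 x = l (x, 0)" for x
  define l2 where "l2 x = l (0, x)" for x
  have lsplit: "l (x1, x2) = (l1 x1 \<noteq> l2 x2)" for x1 x2
  proof -
    have "l (x1, x2) = l ((x1, 0) + (0, x2))" by simp
    then show ?thesis using l unfolding lin_functional_def l1_def l2_def by metis
  qed
  have l1: "lin_functional l1" using l unfolding lin_functional_def l1_def
    by (metis add_0 prod.sel zero_prod_def plus_prod_def)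
  define T where "T c \<longleftrightarrow> (\<forall>x. trb n (x * c) = l1 x)" for c :: 'a
  let ?N = "real CARD('a)"
  have cT: "card {c. T c} = 1" unfolding T_def by (rule unique_trace_rep[OF assms(1,2) l1])
  then obtain c0 where c0: "{c. T c} = {c0}" by (meson card_1_singletonE)
  have inner: "(\<Sum>x1\<in>UNIV. sb (trb n (x1 * c) \<noteq> l1 x1)) = (if c = c0 then ?N else 0)" for c
  proof -
    have "(\<Sum>x1\<in>UNIV. sb (trb n (x1 * c) \<noteq> l1 x1)) =
        (if \<forall>x. \<not> (trb n (x * c) \<noteq> l1 x) then ?N else 0)"
      by (rule char_sum) (use l1 in \<open>auto simp: lin_functional_def trb_add[OF assms(1,2)] distrib_right\<close>)
    moreover have "(\<forall>x. \<not> (trb n (x * c) \<noteq> l1 x)) \<longleftrightarrow> c = c0" using c0 unfolding T_def by auto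
    ultimately show ?thesis by simp
  qed
  obtain x20 where x20: "\<pi> x20 = c0" using bij_is_surj[OF assms(3)] by (metis surjD)
  have x20u: "\<pi> x2 = c0 \<longleftrightarrow> x2 = x20" for x2 using bij_is_inj[OF assms(3)] x20 by (metis injD)
  have "(\<Sum>x\<in>UNIV. (-1::real) ^ (if (case x of (x1, x2) \<Rightarrow> trb n (x1 * \<pi> x2)) \<noteq> l x then 1 else 0))
      = (\<Sum>x\<in>UNIV. sb ((case x of (x1, x2) \<Rightarrow> trb n (x1 * \<pi> x2)) \<noteq> l x))"
    by (intro sum.cong) (auto simp: sb_def)
  also have "\<dots> = (\<Sum>(x1,x2)\<in>UNIV \<times> UNIV. sb (trb n (x1 * \<pi> x2) \<noteq> l (x1, x2)))"
    by (simp add: case_prod_beta)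
  also have "\<dots> = (\<Sum>x1\<in>UNIV. \<Sum>x2\<in>UNIV. sb (trb n (x1 * \<pi> x2) \<noteq> l (x1, x2)))"
    by (simp add: sum.cartesian_product)
  also have "\<dots> = (\<Sum>x2\<in>UNIV. \<Sum>x1\<in>UNIV. sb (l2 x2) * sb (trb n (x1 * \<pi> x2) \<noteq> l1 x1))"
    by (subst sum.swap) (intro sum.cong refl, auto simp: sb_def lsplit)
  also have "\<dots> = (\<Sum>x2\<in>UNIV. sb (l2 x2) * (if x2 = x20 then ?N else 0))"
    by (intro sum.cong refl) (simp only: sum_distrib_left[symmetric] inner x20u)
  also have "\<dots> = sb (l2 x20) * ?N" by (simp add: if_distrib cong: if_cong)
  finally have W: "(\<Sum>x\<in>UNIV. (-1::real) ^ (if (case x of (x1, x2) \<Rightarrow> trb n (x1 * \<pi> x2)) \<noteq> l x then 1 else 0))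
      = sb (l2 x20) * ?N" .
  have "CARD('a \<times> 'a) = CARD('a) * CARD('a)" by (metis UNIV_Times_UNIV card_cartesian_product)
  then have "sqrt (real CARD('a \<times> 'a)) = ?N" by (simp add: real_sqrt_mult)
  then show "\<bar>\<Sum>x\<in>UNIV. (-1::real) ^ (if (case x of (x1, x2) \<Rightarrow> trb n (x1 * \<pi> x2)) \<noteq> l x then 1 else 0)\<bar>
      = sqrt (real CARD('a \<times> 'a))"
    unfolding W by (simp add: sb_def abs_mult)
qed

lemma bent_swap:
  assumes "bent (g :: 'a::{ab_group_add,finite} \<times> 'a \<Rightarrow> bool)"
  shows "bent (\<lambda>(x1, x2). g (x2, x1))"
  unfolding bent_def
proof (intro allI impI)
  fix l :: "'a \<times> 'a \<Rightarrow> bool" assume l: "lin_functional l"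
  have l': "lin_functional (\<lambda>(x1, x2). l (x2, x1))"
    using l unfolding lin_functional_def by auto
  have "(\<Sum>x\<in>UNIV. (-1::real) ^ (if (case x of (x1, x2) \<Rightarrow> g (x2, x1)) \<noteq> l x then 1 else 0))
     = (\<Sum>x\<in>UNIV. (-1::real) ^ (if g x \<noteq> (case x of (x1, x2) \<Rightarrow> l (x2, x1)) then 1 else 0))"
    by (rule sum.reindex_bij_witness[of _ prod.swap prod.swap]) auto
  then show "\<bar>\<Sum>x\<in>UNIV. (-1::real) ^ (if (case x of (x1, x2) \<Rightarrow> g (x2, x1)) \<noteq> l x then 1 else 0)\<bar>
      = sqrt (real CARD('a \<times> 'a))"
    using assms l' unfolding bent_def by simp
qed


definition D2 :: "('v::plus \<Rightarrow> bool) \<Rightarrow> 'v \<Rightarrow> 'v \<Rightarrow> 'v \<Rightarrow> bool" where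
  "D2 F x u v = ((F x \<noteq> F (x + u)) \<noteq> (F (x + v) \<noteq> F (x + u + v)))"

definition F0 :: "('a::field \<Rightarrow> 'a) \<Rightarrow> nat \<Rightarrow> 'a \<times> 'a \<Rightarrow> bool" where
  "F0 \<pi> m = (\<lambda>(x1, x2). trb m (x1 * \<pi> x2))"

definition F1 :: "('a::field \<Rightarrow> 'a) \<Rightarrow> nat \<Rightarrow> 'a \<times> 'a \<Rightarrow> bool" where
  "F1 \<pi> m = (\<lambda>(x1, x2). trb m (x2 * \<pi> x1))"

lemma trb_add4:
  assumes "CARD('a::{field,finite}) = 2 ^ n" "n > 0"
  shows "trb n ((A::'a) + B + C + D) = (((trb n A \<noteq> trb n B) \<noteq> trb n C) \<noteq> trb n D)"
  by (simp add: trb_add[OF assms])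

lemma D2_F0:
  assumes "CARD('a::{field,finite}) = 2 ^ m" "m > 0"
  shows "D2 (F0 \<pi> m) (x1::'a, x2) (a1, a2) (b1, b2) =
    trb m (x1 * (\<pi> x2 + \<pi> (x2 + a2) + \<pi> (x2 + b2) + \<pi> (x2 + a2 + b2)) +
      (a1 * \<pi> (x2 + a2) + b1 * \<pi> (x2 + b2) + (a1 + b1) * \<pi> (x2 + a2 + b2)))"
proof -
  have e: "x1 * (\<pi> x2 + \<pi> (x2 + a2) + \<pi> (x2 + b2) + \<pi> (x2 + a2 + b2)) +
      (a1 * \<pi> (x2 + a2) + b1 * \<pi> (x2 + b2) + (a1 + b1) * \<pi> (x2 + a2 + b2))
    = x1 * \<pi> x2 + (x1 + a1) * \<pi> (x2 + a2) + (x1 + b1) * \<pi> (x2 + b2) + (x1 + a1 + b1) * \<pi> (x2 + a2 + b2)"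
    by (simp add: algebra_simps)
  show ?thesis unfolding e D2_def F0_def by (simp add: trb_add[OF assms]) auto
qed

lemma D2_F1:
  "D2 (F1 \<pi> m) (x1, x2) (a1, a2) (b1, b2) = D2 (F0 \<pi> m) (x2, x1) (a2, a1) (b2, b1)"
  unfolding D2_def F0_def F1_def by simp

lemma D2_F0_zero_P:
  assumes "CARD('a::{field,finite}) = 2 ^ m" "m > 0"
    and z: "\<forall>x1 x2. \<not> D2 (F0 \<pi> m) (x1, x2) (a1, a2) (b1, (b2::'a))"
  shows "\<forall>x. \<pi> x + \<pi> (x + a2) + \<pi> (x + b2) + \<pi> (x + a2 + b2) = 0 \<and>
          tr m (a1 * \<pi> (x + a2) + b1 * \<pi> (x + b2) + (a1 + b1) * \<pi> (x + a2 + b2)) = 0"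
proof
  fix x
  define \<Delta> where "\<Delta> = \<pi> x + \<pi> (x + a2) + \<pi> (x + b2) + \<pi> (x + a2 + b2)"
  define C where "C = a1 * \<pi> (x + a2) + b1 * \<pi> (x + b2) + (a1 + b1) * \<pi> (x + a2 + b2)"
  have h: "\<not> trb m (x1 * \<Delta> + C)" for x1
    using z D2_F0[OF assms(1,2), of \<pi> x1 x a1 a2 b1 b2] unfolding \<Delta>_def C_def by simp
  have hC: "\<not> trb m C" using h[of 0] by simp
  have hD: "\<not> trb m (x1 * \<Delta>)" for x1
    using h[of x1] hC trb_add[OF assms(1,2), of "x1 * \<Delta>" C] by simp
  have "\<Delta> = 0" using trb_nondeg[OF assms(1,2), of \<Delta>] hD by blast
  moreover have "tr m C = 0" using hC tr_01[OF assms(1,2), of C] unfolding trb_def by blast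
  ultimately show "\<pi> x + \<pi> (x + a2) + \<pi> (x + b2) + \<pi> (x + a2 + b2) = 0 \<and>
          tr m (a1 * \<pi> (x + a2) + b1 * \<pi> (x + b2) + (a1 + b1) * \<pi> (x + a2 + b2)) = 0"
    unfolding \<Delta>_def C_def by simp
qed

lemma good_pair:
  assumes "CARD('a::{field,finite}) = 2 ^ m" "m > 0" and P: "property_P m \<pi>"
    and z0: "\<forall>x. \<not> D2 (F0 \<pi> m) x p q" and z1: "\<forall>x. \<not> D2 (F1 \<pi> m) x p (q :: 'a \<times> 'a)"
  shows "p = 0 \<or> q = 0 \<or> p = q"
proof -
  obtain a1 a2 where p: "p = (a1, a2)" by fastforce
  obtain b1 b2 where q: "q = (b1, b2)" by fastforce
  have A: "(a1, a2) = (0, 0) \<or> (b1, b2) = (0, 0) \<or> (a1, a2) = (b1, b2) \<or> (a2 = 0 \<and> b2 = 0)"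
    using P D2_F0_zero_P[OF assms(1,2), of \<pi> a1 a2 b1 b2] z0 unfolding property_P_def p q by blast
  have z1': "\<forall>x1 x2. \<not> D2 (F0 \<pi> m) (x1, x2) (a2, a1) (b2, b1)"
    using z1 D2_F1[of \<pi> m _ _ a1 a2 b1 b2] unfolding p q by metis
  have B: "(a2, a1) = (0, 0) \<or> (b2, b1) = (0, 0) \<or> (a2, a1) = (b2, b1) \<or> (a1 = 0 \<and> b1 = 0)"
    using P D2_F0_zero_P[OF assms(1,2) z1'] unfolding property_P_def by blast
  show ?thesis using A B unfolding p q by (auto simp: zero_prod_def)
qed

lemma D2f_split:
  fixes f :: "('a::{field,finite} \<times> 'a) \<times> 'b::{field,finite} \<times> 'b \<Rightarrow> bool"
  assumes "CARD('b) = 2 ^ k" "k > 0"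
    and fdef: "\<And>x1 x2 y z. f ((x1, x2), y, z) =
       ((if \<not> trb k z then F0 \<pi> m (x1, x2) else F1 \<pi> m (x1, x2)) \<noteq> trb k (y * z))"
    and \<beta>: "\<not> trb k \<beta>" and \<delta>: "\<not> trb k \<delta>"
  shows "D2 f ((x1, x2), y, z) ((a1, a2), \<alpha>, \<beta>) ((b1, b2), \<gamma>, \<delta>) =
     (D2 (if \<not> trb k z then F0 \<pi> m else F1 \<pi> m) (x1, x2) (a1, a2) (b1, b2) \<noteq> trb k (\<alpha> * \<delta> + \<beta> * \<gamma>))"
proof -
  have tz1: "trb k (z + \<beta>) = trb k z" using \<beta> trb_add[OF assms(1,2)] by simp
  have tz2: "trb k (z + \<delta>) = trb k z" using \<delta> trb_add[OF assms(1,2)] by simp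
  have tz3: "trb k (z + \<beta> + \<delta>) = trb k z" using \<beta> \<delta> trb_add[OF assms(1,2)] by simp
  have yz: "(y + \<alpha> + \<gamma>) * (z + \<beta> + \<delta>) = y * z + (y + \<alpha>) * (z + \<beta>) + (y + \<gamma>) * (z + \<delta>) + (\<alpha> * \<delta> + \<beta> * \<gamma>)"
  proof -
    have "y * z + (y + \<alpha>) * (z + \<beta>) + (y + \<gamma>) * (z + \<delta>) + (\<alpha> * \<delta> + \<beta> * \<gamma>)
       = (y + \<alpha> + \<gamma>) * (z + \<beta> + \<delta>) + (y * z + y * z)" by (simp add: algebra_simps)
    then show ?thesis using ff_add_self[OF assms(1,2), of "y * z"] by simp
  qed
  have T: "trb k ((y + \<alpha> + \<gamma>) * (z + \<beta> + \<delta>)) = 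
     (((trb k (y * z) \<noteq> trb k ((y + \<alpha>) * (z + \<beta>))) \<noteq> trb k ((y + \<gamma>) * (z + \<delta>))) \<noteq> trb k (\<alpha> * \<delta> + \<beta> * \<gamma>))"
    unfolding yz by (rule trb_add4[OF assms(1,2)])
  show ?thesis
    unfolding D2_def using tz1 tz2 tz3 T by (cases "trb k z") (simp_all add: fdef add.assoc, auto)
qed

lemma card_balanced:
  fixes t :: "'v::ab_group_add \<Rightarrow> bool"
  assumes fin: "finite S" and cl: "\<And>u v. u \<in> S \<Longrightarrow> v \<in> S \<Longrightarrow> u + v \<in> S"
    and hom: "\<And>u v. t (u + v) = (t u \<noteq> t v)" and u0: "u0 \<in> S" "t u0"
  shows "card S = 2 * card {u\<in>S. \<not> t u}"
proof -
  have inj: "inj_on (\<lambda>u. u + u0) A" for A by (auto simp: inj_on_def)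
  have "card {u\<in>S. t u} \<le> card {u\<in>S. \<not> t u}"
  proof -
    have "(\<lambda>u. u + u0) ` {u\<in>S. t u} \<subseteq> {u\<in>S. \<not> t u}" using u0 cl hom by auto
    then show ?thesis using card_inj_on_le[OF inj] fin by auto
  qed
  moreover have "card {u\<in>S. \<not> t u} \<le> card {u\<in>S. t u}"
  proof -
    have "(\<lambda>u. u + u0) ` {u\<in>S. \<not> t u} \<subseteq> {u\<in>S. t u}" using u0 cl hom by auto
    then show ?thesis using card_inj_on_le[OF inj] fin by auto
  qed
  moreover have "card S = card {u\<in>S. t u} + card {u\<in>S. \<not> t u}"
  proof -
    have "S = {u\<in>S. t u} \<union> {u\<in>S. \<not> t u}" by auto
    then have "card S = card ({u\<in>S. t u} \<union> {u\<in>S. \<not> t u})" by simp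
    also have "\<dots> = card {u\<in>S. t u} + card {u\<in>S. \<not> t u}"
      by (rule card_Un_disjoint) (use fin in auto)
    finally show ?thesis .
  qed
  ultimately show ?thesis by linarith
qed

lemma pick_outside:
  assumes "finite B" "card A > card B" "finite A"
  shows "\<exists>x\<in>A. x \<notin> B"
proof (rule ccontr)
  assume "\<not> ?thesis"
  then have "A \<subseteq> B" by blast
  then have "card A \<le> card B" using assms(1) by (rule card_mono[rotated])
  then show False using assms(2) by simp
qed

lemma card2: "card {a, b} \<le> 2"
proof -
  have "card (set [a, b]) \<le> length [a, b]" by (rule card_length)
  then show ?thesis by simp
qed

lemma card4: "card {a, b, c, d} \<le> 4"
proof -
  have "card (set [a, b, c, d]) \<le> length [a, b, c, d]" by (rule card_length)
  then show ?thesis by simp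
qed

lemma notMM:
  fixes \<pi> :: "'a::{field,finite} \<Rightarrow> 'a" and f :: "('a \<times> 'a) \<times> 'b::{field,finite} \<times> 'b \<Rightarrow> bool"
  assumes k0: "k > 0" and mk: "m > k + 2"
    and ca: "CARD('a) = 2 ^ m" and cb: "CARD('b) = 2 ^ k"
    and cc: "CARD('c::{field,finite}) = 2 ^ (m + k)"
    and P: "property_P m \<pi>"
    and fdef: "\<And>x1 x2 y z. f ((x1, x2), y, z) =
       ((if \<not> trb k z then F0 \<pi> m (x1, x2) else F1 \<pi> m (x1, x2)) \<noteq> trb k (y * z))"
  shows "\<not> MM_sharp TYPE('c) (m + k) f"
proof
  assume "MM_sharp TYPE('c) (m + k) f"
  then obtain \<phi> :: "('a \<times> 'a) \<times> 'b \<times> 'b \<Rightarrow> 'c \<times> 'c" and h where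
    \<phi>: "lin_map \<phi>" "bij \<phi>" and hMM: "MM (m + k) h" and ea: "EA_equiv (h \<circ> \<phi>) f"
    unfolding MM_sharp_def by blast
  obtain \<pi>' g where hdef: "\<And>x y. h (x, y) = (trb (m + k) (x * \<pi>' y) \<noteq> g y)"
    using hMM unfolding MM_def by blast
  obtain L a l b where L: "lin_map L" "bij L" and l: "lin_functional l"
    and fe: "\<And>x. f x = (((h \<circ> \<phi>) (L x + a) \<noteq> l x) \<noteq> b)"
    using ea unfolding EA_equiv_def by blast
  have m0: "m > 0" using mk by simp
  have mk0: "m + k > 0" using mk by simp
  define M where "M = \<phi> \<circ> L"
  have \<phi>add: "\<phi> (x + y) = \<phi> x + \<phi> y" for x y using \<phi>(1) unfolding lin_map_def by blast
  have Ladd: "L (x + y) = L x + L y" for x y using L(1) unfolding lin_map_def by blast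
  have Madd: "M (x + y) = M x + M y" for x y unfolding M_def by (simp add: \<phi>add Ladd)
  have M0: "M 0 = 0" using Madd[of 0 0] by simp
  have Mbij: "bij M" unfolding M_def using \<phi>(2) L(2) by (rule bij_comp[rotated])
  have ladd: "l (x + y) = (l x \<noteq> l y)" for x y using l unfolding lin_functional_def by blast
  have l0: "l 0 = False" by (rule lin_functional_zero[OF l])
  define U where "U = {u. snd (M u) = 0}"
  have U0: "0 \<in> U" unfolding U_def using M0 by simp
  have Ucl: "u + v \<in> U" if "u \<in> U" "v \<in> U" for u v using that unfolding U_def by (simp add: Madd)
  have cardU: "card U = 2 ^ (m + k)"
  proof -
    have "bij_betw M U (UNIV \<times> {0})"
      unfolding bij_betw_def
    proof
      show "inj_on M U" using bij_is_inj[OF Mbij] by (rule inj_on_subset) simp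
      show "M ` U = UNIV \<times> {0}"
      proof
        show "M ` U \<subseteq> UNIV \<times> {0}"
        proof
          fix p assume "p \<in> M ` U"
          then obtain u where "u \<in> U" "p = M u" by blast
          then have "snd p = 0" unfolding U_def by simp
          then show "p \<in> UNIV \<times> {0}" by (simp add: mem_Times_iff)
        qed
        show "UNIV \<times> {0} \<subseteq> M ` U"
        proof
          fix p :: "'c \<times> 'c" assume "p \<in> UNIV \<times> {0}"
          moreover obtain u where "M u = p" using bij_is_surj[OF Mbij] by (metis surjD)
          ultimately show "p \<in> M ` U" unfolding U_def by auto
        qed
      qed
    qed
    then have "card U = card ((UNIV::'c set) \<times> {0::'c})" by (rule bij_betw_same_card)
    also have "\<dots> = CARD('c)" by (simp add: card_cartesian_product)
    finally show ?thesis using cc by simp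
  qed
  have D2U: "\<not> D2 f x u v" if "u \<in> U" "v \<in> U" for x u v
  proof -
    obtain Pp Q where PQ: "\<phi> (L x + a) = (Pp, Q)" by fastforce
    have fsh: "f (x + w) = (((((trb (m + k) (Pp * \<pi>' Q) \<noteq> trb (m + k) (fst (M w) * \<pi>' Q)) \<noteq> g Q)
                  \<noteq> (l x \<noteq> l w)) \<noteq> b))" if w: "w \<in> U" for w
    proof -
      have "L (x + w) + a = (L x + a) + L w" by (simp add: Ladd algebra_simps)
      then have "\<phi> (L (x + w) + a) = (Pp, Q) + M w" using PQ by (simp add: \<phi>add M_def)
      also have "M w = (fst (M w), 0)" using w unfolding U_def by (metis (mono_tags) mem_Collect_eq prod.collapse)
      finally have e: "\<phi> (L (x + w) + a) = (Pp + fst (M w), Q)" by simp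
      show ?thesis unfolding fe comp_def e hdef ladd
        by (simp add: distrib_right trb_add[OF cc mk0])
    qed
    have x0: "f x = f (x + 0)" by simp
    have Mu: "fst (M (u + v)) = fst (M u) + fst (M v)" by (simp add: Madd)
    show ?thesis
      unfolding D2_def
      using fsh[OF U0] fsh[OF that(1)] fsh[OF that(2)] fsh[OF Ucl[OF that]]
      by (simp add: add.assoc M0 l0 ladd Mu distrib_right trb_add[OF cc mk0] trb_zero) argo
  qed
  define t where "t = (trb k :: 'b \<Rightarrow> bool)"
  have tadd: "t (x + y) = (t x \<noteq> t y)" for x y unfolding t_def by (rule trb_add[OF cb k0])
  define U' where "U' = {u\<in>U. \<not> t (snd (snd u))}"
  have U'cl: "u + v \<in> U'" if "u \<in> U'" "v \<in> U'" for u v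
    using that Ucl unfolding U'_def by (auto simp: tadd)
  have cU': "card U \<le> 2 * card U'"
  proof (cases "\<exists>u0\<in>U. t (snd (snd u0))")
    case True
    then obtain u0 where "u0 \<in> U" "t (snd (snd u0))" by blast
    have "card U = 2 * card {u\<in>U. \<not> t (snd (snd u))}"
      by (rule card_balanced[where t="\<lambda>u. t (snd (snd u))"]) (use Ucl \<open>u0 \<in> U\<close> \<open>t (snd (snd u0))\<close> in \<open>auto simp: tadd\<close>)
    then show ?thesis unfolding U'_def by simp
  next
    case False
    then have "U' = U" unfolding U'_def by auto
    then show ?thesis by simp
  qed
  define K where "K = {\<beta>::'b. \<not> t \<beta>}"
  have cK: "2 ^ k = 2 * card K"
  proof -
    obtain \<beta>0 :: 'b where "trb k \<beta>0" using trb_exists[OF cb k0] by blast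
    have "card (UNIV :: 'b set) = 2 * card {\<beta>\<in>UNIV. \<not> t \<beta>}"
      by (rule card_balanced[where t=t]) (use \<open>trb k \<beta>0\<close> in \<open>auto simp: t_def trb_add[OF cb k0]\<close>)
    then show ?thesis using cb unfolding K_def by simp
  qed
  define W where "W = fst ` U'"
  have "U' \<subseteq> W \<times> (UNIV \<times> K)"
  proof
    fix u assume u: "u \<in> U'"
    then have "fst u \<in> W" "snd (snd u) \<in> K" unfolding W_def K_def U'_def by auto
    then show "u \<in> W \<times> (UNIV \<times> K)" by (simp add: mem_Times_iff)
  qed
  then have "card U' \<le> card (W \<times> ((UNIV :: 'b set) \<times> K))" by (intro card_mono) auto
  also have "\<dots> = card W * (2 ^ k * card K)" using cb by (simp add: card_cartesian_product)
  finally have "card U' \<le> card W * (2 ^ k * card K)" .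
  then have "2 ^ (m + k) \<le> card W * (2 ^ k * (2 * card K))" using cU' cardU by simp
  then have big: "2 ^ (m + k) \<le> card W * 2 ^ (2 * k)" using cK by (simp add: power_add mult_2 )
  have cW: "card W > 4"
  proof (rule ccontr)
    assume "\<not> card W > 4"
    then have "card W * 2 ^ (2 * k) \<le> 2 ^ 2 * 2 ^ (2 * k)" by simp
    then have "(2::nat) ^ (m + k) \<le> 2 ^ 2 * 2 ^ (2 * k)" using big by (rule order_trans[rotated])
    also have "\<dots> = 2 ^ (2 * k + 2)" by (simp add: power_add)
    finally have X: "(2::nat) ^ (m + k) \<le> 2 ^ (2 * k + 2)" .
    have "m + k \<le> 2 * k + 2" by (rule power_le_imp_le_exp[OF _ X]) simp
    then show False using mk by simp
  qed
  define c where "c u v = t (fst (snd u) * snd (snd v) + snd (snd u) * fst (snd v))" for u v :: "('a \<times> 'a) \<times> 'b \<times> 'b"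
  have cbil: "c u (v + w) = (c u v \<noteq> c u w)" for u v w
  proof -
    have e: "fst (snd u) * snd (snd (v + w)) + snd (snd u) * fst (snd (v + w)) =
      (fst (snd u) * snd (snd v) + snd (snd u) * fst (snd v)) + (fst (snd u) * snd (snd w) + snd (snd u) * fst (snd w))"
      by (simp add: algebra_simps)
    show ?thesis unfolding c_def e tadd ..
  qed
  obtain z1 :: 'b where z1: "trb k z1" using trb_exists[OF cb k0] by blast
  have key: "fst u = 0 \<or> fst v = 0 \<or> fst u = fst v" if uv: "u \<in> U'" "v \<in> U'" "\<not> c u v" for u v
  proof -
    obtain a1 a2 \<alpha> \<beta> where u: "u = ((a1, a2), \<alpha>, \<beta>)" by (metis prod.collapse)
    obtain b1 b2 \<gamma> \<delta> where v: "v = ((b1, b2), \<gamma>, \<delta>)" by (metis prod.collapse)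
    have \<beta>: "\<not> trb k \<beta>" and \<delta>: "\<not> trb k \<delta>" using uv unfolding U'_def u v t_def by auto
    have cc0: "\<not> trb k (\<alpha> * \<delta> + \<beta> * \<gamma>)" using uv(3) unfolding c_def u v t_def by simp
    have e0: "\<not> D2 (F0 \<pi> m) x (a1, a2) (b1, b2)" for x
    proof -
      obtain x1 x2 where x: "x = (x1, x2)" by fastforce
      have "\<not> D2 f ((x1, x2), 0, 0) u v" using D2U uv unfolding U'_def by blast
      then show ?thesis using D2f_split[OF cb k0 fdef \<beta> \<delta>, of x1 x2 0 0 a1 a2 \<alpha> b1 b2 \<gamma>] cc0
        unfolding u v x by (simp add: trb_zero)
    qed
    have e1: "\<not> D2 (F1 \<pi> m) x (a1, a2) (b1, b2)" for x
    proof -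
      obtain x1 x2 where x: "x = (x1, x2)" by fastforce
      have "\<not> D2 f ((x1, x2), 0, z1) u v" using D2U uv unfolding U'_def by blast
      then show ?thesis using D2f_split[OF cb k0 fdef \<beta> \<delta>, of x1 x2 0 z1 a1 a2 \<alpha> b1 b2 \<gamma>] cc0 z1
        unfolding u v x by simp
    qed
    have "(a1, a2) = 0 \<or> (b1, b2) = 0 \<or> (a1, a2) = (b1, b2)"
      by (rule good_pair[OF ca m0 P]) (use e0 e1 in blast)+
    then show ?thesis unfolding u v by simp
  qed
  have Wfin: "finite W" by simp
  obtain pv where pv: "pv \<in> W" "pv \<notin> {0}"
    using pick_outside[of "{0}" W] cW Wfin by auto
  obtain pw where pw: "pw \<in> W" "pw \<notin> {0, pv}"
    using pick_outside[of "{0, pv}" W] cW Wfin card2[of 0 pv] by fastforce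
  obtain pu where pu: "pu \<in> W" "pu \<notin> {0, pv, pw, pv + pw}"
    using pick_outside[of "{0, pv, pw, pv + pw}" W] cW Wfin card4[of 0 pv pw "pv + pw"] by fastforce
  obtain u where u: "u \<in> U'" "fst u = pu" using pu unfolding W_def by blast
  obtain v where v: "v \<in> U'" "fst v = pv" using pv unfolding W_def by blast
  obtain w where w: "w \<in> U'" "fst w = pw" using pw unfolding W_def by blast
  have pvw: "pv + pw \<noteq> 0"
  proof
    assume "pv + pw = 0"
    moreover have "pv + pv = 0"
      by (cases pv) (simp add: ff_add_self[OF ca m0] zero_prod_def)
    ultimately have "pw = pv" by (metis add_left_cancel)
    then show False using pw by simp
  qed
  have vw: "v + w \<in> U'" "fst (v + w) = pv + pw" using U'cl[OF v(1) w(1)] v w by auto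
  show False
  proof (cases "c u v")
    case False
    then show False using key[OF u(1) v(1)] u v pu pv by auto
  next
    case cuv: True
    show False
    proof (cases "c u w")
      case False
      then show False using key[OF u(1) w(1)] u w pu pw by auto
    next
      case True
      then have "\<not> c u (v + w)" using cuv cbil by simp
      then show False using key[OF u(1) vw(1)] u vw pu pvw by auto
    qed
  qed
qed


theorem theorem3p7:
  fixes m k :: nat
    and \<pi> :: "'a::{field,finite} \<Rightarrow> 'a"
  assumes "k > 0" and "m > k + 2"
    and "CARD('a) = 2 ^ m"
    and "CARD('b::{field,finite}) = 2 ^ k"
    and "CARD('c::{field,finite}) = 2 ^ (m + k)"
    and "bij \<pi>" and "property_P m \<pi>"
  shows "let fz = (\<lambda>(z::'b) (x1::'a, x2::'a).
                    if \<not> trb k z then trb m (x1 * \<pi> x2) else trb m (x2 * \<pi> x1));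
             f = (\<lambda>((x1::'a, x2::'a), y::'b, z::'b). fz z (x1, x2) \<noteq> trb k (y * z))
         in is_GMM k f \<and> \<not> MM_sharp TYPE('c) (m + k) f"
  unfolding Let_def
proof (intro conjI)
  have m0: "m > 0" using assms(2) by simp
  have b0: "bent (\<lambda>(x1::'a, x2::'a). trb m (x1 * \<pi> x2))" by (rule bent_F0[OF assms(3) m0 assms(6)])
  have b1: "bent (\<lambda>(x1::'a, x2::'a). trb m (x2 * \<pi> x1))"
    using bent_swap[OF b0] by (simp add: case_prod_beta)
  show "is_GMM k (\<lambda>((x1::'a, x2::'a), y::'b, z::'b).
        (case (x1, x2) of (x1, x2) \<Rightarrow> if \<not> trb k z then trb m (x1 * \<pi> x2) else trb m (x2 * \<pi> x1)) \<noteq> trb k (y * z))"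
  proof -
    define FZ where "FZ = (\<lambda>(z::'b) (x1::'a, x2::'a). if \<not> trb k z then trb m (x1 * \<pi> x2) else trb m (x2 * \<pi> x1))"
    have A: "bent (FZ z)" for z
      using b0 b1 unfolding FZ_def by (cases "trb k z") simp_all
    show ?thesis unfolding is_GMM_def
      apply (rule_tac x=FZ in exI)
      apply (rule conjI)
      using A apply blast
      apply (intro allI)
      subgoal for w y z by (cases w) (simp add: FZ_def)
      done
  qed
next
  have m0: "m > 0" using assms(2) by simp
  show "\<not> MM_sharp TYPE('c) (m + k) (\<lambda>((x1::'a, x2::'a), y::'b, z::'b).
        (case (x1, x2) of (x1, x2) \<Rightarrow> if \<not> trb k z then trb m (x1 * \<pi> x2) else trb m (x2 * \<pi> x1)) \<noteq> trb k (y * z))"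
    by (rule notMM[OF assms(1,2,3,4,5,7)]) (simp add: F0_def F1_def)
qed

end
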